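(* Let $N, M$ be positive integers, let $B=[b_{ij}]$ be a real $N\times M$ matrix and $C=[c_{ij}]$ a real $M\times N$ matrix. Define the ultradiscrete product $B\otimes C$ as the $N\times N$ matrix $$B\otimes C=\Big[\max_{1\le k\le M}(b_{ik}+c_{kj})\Big]_{1\le i,j\le N}.$$ Then $$\mathrm{UP}[B\otimes C]=\max_{1\le j_1\le j_2\le\cdots\le j_N\le M}\Big(\mathrm{UP}[B]^{1\dots N}_{j_1\dots j_N}+\mathrm{UP}[C]^{j_1\dots j_N}_{1\dots N}\Big).$$
   Context: For a real $N\times N$ matrix $A=[a_{ij}]$, the ultradiscrete permanent is $\mathrm{UP}[A]=\max_{\pi}(a_{1\pi_1}+a_{2\pi_2}+\cdots+a_{N\pi_N})$, the maximum over all permutations $\pi=(\pi_1,\dots,\pi_N)$ of $\{1,\dots,N\}$. For indices $1\le j_1\le\cdots\le j_N\le M$ (repetitions allowed), $\mathrm{UP}[B]^{1\dots N}_{j_1\dots j_N}$ denotes the ultradiscrete permanent of the $N\times N$ matrix whose $k$-th column is the $j_k$-th column of $B$ (all rows of $B$ kept), and $\mathrm{UP}[C]^{j_1\dots j_N}_{1\dots N}$ denotes the ultradiscrete permanent of the $N\times N$ matrix whose $k$-th row is the $j_k$-th row of $C$ (all columns of $C$ kept). *)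

theory Defs
  imports Complex_Main "HOL-Combinatorics.Permutations"
begin

text \<open>Matrices are functions nat => nat => real, indices 1-based.
  UP A n: ultradiscrete permanent of the n x n matrix with entries A i j, 1 <= i,j <= n.\<close>
definition UP :: "(nat \<Rightarrow> nat \<Rightarrow> real) \<Rightarrow> nat \<Rightarrow> real" where
  "UP A n = Max {(\<Sum>i=1..n. A i (p i)) | p. p permutes {1..n}}"

definition ud_prod :: "nat \<Rightarrow> (nat \<Rightarrow> nat \<Rightarrow> real) \<Rightarrow> (nat \<Rightarrow> nat \<Rightarrow> real) \<Rightarrow> (nat \<Rightarrow> nat \<Rightarrow> real)" where
  "ud_prod M B C = (\<lambda>i j. Max {B i k + C k j | k. k \<in> {1..M}})"

definition sel_cols :: "(nat \<Rightarrow> nat \<Rightarrow> real) \<Rightarrow> nat list \<Rightarrow> (nat \<Rightarrow> nat \<Rightarrow> real)" where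
  "sel_cols B js = (\<lambda>i k. B i (js ! (k - 1)))"

definition sel_rows :: "(nat \<Rightarrow> nat \<Rightarrow> real) \<Rightarrow> nat list \<Rightarrow> (nat \<Rightarrow> nat \<Rightarrow> real)" where
  "sel_rows C js = (\<lambda>k j. C (js ! (k - 1)) j)"

end

theory Submission
  imports Defs
begin

lemma UP_fin: fixes n :: nat shows "finite {(\<Sum>i=1..n. A i (p i)) | p. p permutes {1..n}}"
proof -
  have "{(\<Sum>i=1..n. A i (p i)) | p. p permutes {1..n}} = (\<lambda>p. \<Sum>i=1..n. A i (p i)) ` {p. p permutes {1..n}}"
    by auto
  moreover have "finite {p. p permutes {1..n}}" by (rule finite_permutations) simp
  ultimately show ?thesis by (simp only:) (rule finite_imageI)
qed

lemma UP_ge: "p permutes {1..n} \<Longrightarrow> (\<Sum>i=1..n. A i (p i)) \<le> UP A n"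
  unfolding UP_def by (rule Max_ge[OF UP_fin]) blast

lemma UP_att: "\<exists>p. p permutes {1..n} \<and> UP A n = (\<Sum>i=1..n. A i (p i))"
proof -
  have "UP A n \<in> {(\<Sum>i=1..n. A i (p i)) | p. p permutes {1..n}}"
    unfolding UP_def by (rule Max_in[OF UP_fin]) (use permutes_id in blast)
  thus ?thesis by auto
qed

lemma ud_fin: fixes M :: nat shows "finite {B i k + C k j | k. k \<in> {1..M}}"
proof -
  have "{B i k + C k j | k. k \<in> {1..M}} = (\<lambda>k. B i k + C k j) ` {1..M}" by auto
  thus ?thesis by (simp only:) (rule finite_imageI, simp)
qed

lemma ud_ge: "k \<in> {1..M} \<Longrightarrow> B i k + C k j \<le> ud_prod M B C i j"
  unfolding ud_prod_def by (rule Max_ge[OF ud_fin]) blast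

lemma ud_att: "M \<ge> 1 \<Longrightarrow> \<exists>k\<in>{1..M}. ud_prod M B C i j = B i k + C k j"
proof -
  assume "M \<ge> 1"
  hence "ud_prod M B C i j \<in> {B i k + C k j | k. k \<in> {1..M}}"
    unfolding ud_prod_def by (intro Max_in[OF ud_fin]) auto
  thus ?thesis by auto
qed

theorem proposition1:
  fixes N M :: nat and B C :: "nat \<Rightarrow> nat \<Rightarrow> real"
  assumes "N \<ge> 1" and "M \<ge> 1"
  shows "UP (ud_prod M B C) N =
    Max {UP (sel_cols B js) N + UP (sel_rows C js) N | js.
           length js = N \<and> sorted js \<and> set js \<subseteq> {1..M}}"
proof -
  let ?S = "{UP (sel_cols B js) N + UP (sel_rows C js) N | js.
           length js = N \<and> sorted js \<and> set js \<subseteq> {1..M}}"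
  have finS: "finite ?S"
  proof -
    have "?S \<subseteq> (\<lambda>js. UP (sel_cols B js) N + UP (sel_rows C js) N) ` {js. set js \<subseteq> {1..M} \<and> length js = N}"
      by auto
    moreover have "finite {js. set js \<subseteq> {1..M} \<and> length js = N}"
      by (rule finite_lists_length_eq) simp
    ultimately show ?thesis using finite_subset by blast
  qed
  have neS: "?S \<noteq> {}"
  proof -
    have "length (replicate N 1) = N \<and> sorted (replicate N (1::nat)) \<and> set (replicate N 1) \<subseteq> {1..M}"
      using assms by auto
    thus ?thesis by blast
  qed
  show ?thesis
  proof (rule antisym)
    obtain \<sigma> where \<sigma>: "\<sigma> permutes {1..N}" "UP (ud_prod M B C) N = (\<Sum>i=1..N. ud_prod M B C i (\<sigma> i))"
      using UP_att by blast
    define f where "f i = (SOME k. k \<in> {1..M} \<and> ud_prod M B C i (\<sigma> i) = B i k + C k (\<sigma> i))" for i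
    have f: "f i \<in> {1..M} \<and> ud_prod M B C i (\<sigma> i) = B i (f i) + C (f i) (\<sigma> i)" for i
      unfolding f_def by (rule someI_ex) (use ud_att[OF assms(2)] in blast)
    define xs where "xs = map f [1..<N+1]"
    define js where "js = sort xs"
    have mj: "mset xs = mset js" unfolding js_def by simp
    have ljs: "length js = N" unfolding js_def xs_def by simp
    obtain p where p: "p permutes {..<length js}" "permute_list p js = xs"
      using mset_eq_permutation[OF mj] by blast
    define \<tau> where "\<tau> i = (if i \<in> {1..N} then Suc (p (i - 1)) else i)" for i
    have pin: "i < N \<Longrightarrow> p i < N" for i using permutes_in_image[OF p(1)] ljs by auto
    have tau: "\<tau> permutes {1..N}"
    proof (rule bij_imp_permutes)
      show "\<tau> x = x" if "x \<notin> {1..N}" for x using that unfolding \<tau>_def by auto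
      have "inj_on \<tau> {1..N}"
      proof (rule inj_onI)
        fix x y assume xy: "x \<in> {1..N}" "y \<in> {1..N}" "\<tau> x = \<tau> y"
        hence "p (x - 1) = p (y - 1)" unfolding \<tau>_def by simp
        hence "x - 1 = y - 1" using permutes_inj[OF p(1)] by (simp add: inj_eq)
        thus "x = y" using xy by auto
      qed
      moreover have "\<tau> ` {1..N} = {1..N}"
      proof (rule endo_inj_surj)
        show "\<tau> ` {1..N} \<subseteq> {1..N}"
        proof (rule image_subsetI)
          fix x :: nat assume x: "x \<in> {1..N}"
          hence "x - 1 < N" by auto
          hence "p (x - 1) < N" using pin by blast
          thus "\<tau> x \<in> {1..N}" using x unfolding \<tau>_def by simp
        qed
      qed (use \<open>inj_on \<tau> {1..N}\<close> in auto)
      ultimately show "bij_betw \<tau> {1..N} {1..N}" unfolding bij_betw_def by simp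
    qed
    have fjs: "f i = js ! (\<tau> i - 1)" if "i \<in> {1..N}" for i
    proof -
      have "i - 1 < N" using that by auto
      hence "xs ! (i - 1) = f (1 + (i - 1))" unfolding xs_def
        by (simp del: upt_Suc add: nth_map nth_upt)
      hence "f i = xs ! (i - 1)" using that by simp
      also have "\<dots> = permute_list p js ! (i - 1)" using p(2) by simp
      also have "\<dots> = js ! p (i - 1)" using that ljs by (intro permute_list_nth[OF p(1)]) auto
      finally show ?thesis using that unfolding \<tau>_def by auto
    qed
    have sjs: "set js \<subseteq> {1..M}" unfolding js_def xs_def using f by auto
    have "UP (ud_prod M B C) N = (\<Sum>i=1..N. B i (f i)) + (\<Sum>i=1..N. C (f i) (\<sigma> i))"
      using \<sigma>(2) f by (simp add: sum.distrib)
    also have "(\<Sum>i=1..N. B i (f i)) = (\<Sum>i=1..N. sel_cols B js i (\<tau> i))"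
      unfolding sel_cols_def by (rule sum.cong) (auto simp: fjs)
    also have "(\<Sum>i=1..N. C (f i) (\<sigma> i)) = (\<Sum>i=1..N. C (js ! (\<tau> i - 1)) (\<sigma> i))"
      by (rule sum.cong) (auto simp: fjs)
    also have "\<dots> = (\<Sum>k=1..N. C (js ! (k - 1)) (\<sigma> (inv \<tau> k)))"
      using sum.permutes_inv[OF tau, of "\<lambda>k i. C (js ! (k - 1)) (\<sigma> i)"] by simp
    also have "\<dots> = (\<Sum>k=1..N. sel_rows C js k ((\<sigma> \<circ> inv \<tau>) k))"
      unfolding sel_rows_def by simp
    finally have "UP (ud_prod M B C) N \<le> UP (sel_cols B js) N + UP (sel_rows C js) N"
      using UP_ge[OF tau, of "sel_cols B js"]
        UP_ge[OF permutes_compose[OF permutes_inv[OF tau] \<sigma>(1)], of "sel_rows C js"]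
      by linarith
    also have "\<dots> \<le> Max ?S"
    proof (rule Max_ge[OF finS])
      have "sorted js" unfolding js_def by simp
      thus "UP (sel_cols B js) N + UP (sel_rows C js) N \<in> ?S" using ljs sjs by blast
    qed
    finally show "UP (ud_prod M B C) N \<le> Max ?S" .
  next
    have "Max ?S \<in> ?S" by (rule Max_in[OF finS neS])
    then obtain js where js: "Max ?S = UP (sel_cols B js) N + UP (sel_rows C js) N"
      "length js = N" "set js \<subseteq> {1..M}" by blast
    obtain p where p: "p permutes {1..N}" "UP (sel_cols B js) N = (\<Sum>i=1..N. sel_cols B js i (p i))"
      using UP_att by blast
    obtain q where q: "q permutes {1..N}" "UP (sel_rows C js) N = (\<Sum>i=1..N. sel_rows C js i (q i))"
      using UP_att by blast
    have "(\<Sum>i=1..N. sel_rows C js i (q i)) = (\<Sum>i=1..N. sel_rows C js (p i) (q (p i)))"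
      using sum.permute[OF p(1), of "\<lambda>i. sel_rows C js i (q i)"] by simp
    hence "Max ?S = (\<Sum>i=1..N. B i (js ! (p i - 1)) + C (js ! (p i - 1)) ((q \<circ> p) i))"
      using js(1) p(2) q(2) unfolding sel_cols_def sel_rows_def by (simp add: sum.distrib)
    also have "\<dots> \<le> (\<Sum>i=1..N. ud_prod M B C i ((q \<circ> p) i))"
    proof (rule sum_mono)
      fix i assume i: "i \<in> {1..N}"
      hence "p i \<in> {1..N}" using permutes_in_image[OF p(1)] by simp
      hence "js ! (p i - 1) \<in> set js" using js(2) by (intro nth_mem) auto
      thus "B i (js ! (p i - 1)) + C (js ! (p i - 1)) ((q \<circ> p) i) \<le> ud_prod M B C i ((q \<circ> p) i)"
        using js(3) by (intro ud_ge) auto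
    qed
    also have "\<dots> \<le> UP (ud_prod M B C) N"
      by (rule UP_ge[OF permutes_compose[OF p(1) q(1)]])
    finally show "Max ?S \<le> UP (ud_prod M B C) N" .
  qed
qed

end
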